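(* Let $\triangle P_1P_2P_3$ be a (closed, filled) triangle in $D$ with $\rho(\psi_{\triangle P_1P_2P_3})=\frac{2}{5}$. Then the number of periodic orbits of $\psi_{\triangle P_1P_2P_3}$ of period $5$ is at most $6$.
   Context: $D$ is the open unit disk in $\mathbb R^2$ and $S^1$ its boundary circle, identified with $\mathbb R/\mathbb Z$ via the counterclockwise normalized angle. For a closed convex set $U\subset D$ and $v\in S^1$, $\psi_U(v)$ is the point $w\in S^1\setminus\{v\}$ such that the line $vw$ meets $U$ and $U$ lies in the closed half-plane to the left of the directed line from $v$ to $w$ (the first point counterclockwise from $v$ whose chord from $v$ is tangent to $U$). $\psi_U$ is an orientation-preserving homeomorphism of $S^1$. For an orientation-preserving homeomorphism $f$ of $S^1$, $\rho(f)=\lim_{n\to\infty}(\overline f^n(x)-x)/n$ where $\overline f$ is the lift of $f$ to $\mathbb R$ with $\overline f(0)\in[0,1)$. *)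

theory Defs
  imports "HOL-Analysis.Analysis"
begin

text \<open>The plane R^2 is identified with the complex numbers. D is the open unit disk,
  S^1 the unit circle, identified with R/Z via t \<mapsto> exp(2 pi i t).\<close>

definition unit_disk :: "complex set" where
  "unit_disk = ball 0 1"

definition unit_circle :: "complex set" where
  "unit_circle = sphere 0 1"

definition circ_pt :: "real \<Rightarrow> complex" where
  "circ_pt t = exp (2 * of_real pi * \<i> * of_real t)"

text \<open>Signed cross product: cross a b \<ge> 0 iff b lies (weakly) to the left of direction a.\<close>
definition cross :: "complex \<Rightarrow> complex \<Rightarrow> real" where
  "cross a b = Im (cnj a * b)"

definition psi :: "complex set \<Rightarrow> complex \<Rightarrow> complex" where
  "psi U v = (THE w. w \<in> unit_circle \<and> w \<noteq> v \<and>
       (\<exists>p\<in>U. cross (w - v) (p - v) = 0) \<and>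
       (\<forall>p\<in>U. cross (w - v) (p - v) \<ge> 0))"

definition circle_lift :: "(complex \<Rightarrow> complex) \<Rightarrow> real \<Rightarrow> real" where
  "circle_lift f = (THE F. continuous_on UNIV F \<and> (\<forall>x. circ_pt (F x) = f (circ_pt x))
       \<and> 0 \<le> F 0 \<and> F 0 < 1)"

definition rot_num :: "(complex \<Rightarrow> complex) \<Rightarrow> real" where
  "rot_num f = lim (\<lambda>n. (((circle_lift f) ^^ n) 0 - 0) / real n)"

definition periodic_pt :: "(complex \<Rightarrow> complex) \<Rightarrow> nat \<Rightarrow> complex \<Rightarrow> bool" where
  "periodic_pt f n z \<longleftrightarrow> z \<in> unit_circle \<and> 0 < n \<and> (f ^^ n) z = z \<and>
      (\<forall>k. 0 < k \<and> k < n \<longrightarrow> (f ^^ k) z \<noteq> z)"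

definition orbit :: "(complex \<Rightarrow> complex) \<Rightarrow> complex \<Rightarrow> complex set" where
  "orbit f z = {(f ^^ k) z | k. True}"

definition periodic_orbits :: "(complex \<Rightarrow> complex) \<Rightarrow> nat \<Rightarrow> complex set set" where
  "periodic_orbits f n = {orbit f z | z. periodic_pt f n z}"

end

theory Submission
  imports Defs
begin

definition hI :: "complex \<Rightarrow> complex \<Rightarrow> complex" where
  "hI p v = (p - v) / (1 - cnj p * v)"

lemma circ_iff: "v \<in> unit_circle \<longleftrightarrow> cmod v = 1"
  by (simp add: unit_circle_def)
lemma disk_iff: "v \<in> unit_disk \<longleftrightarrow> cmod v < 1"
  by (simp add: unit_disk_def)

lemma cnj_mult_self_circ: "cmod v = 1 \<Longrightarrow> cnj v * v = 1"
  by (metis complex_cnj_one complex_norm_square mult.commute norm_one of_real_1 power_one)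

lemma hI_den: assumes "cmod p < 1" "cmod v = 1" shows "1 - cnj p * v \<noteq> 0"
proof
  assume "1 - cnj p * v = 0"
  hence "cnj p * v = 1" by simp
  hence "cmod (cnj p * v) = 1" by simp
  thus False using assms by (simp add: norm_mult)
qed

lemma hI_circ: assumes "cmod p < 1" "cmod v = 1" shows "cmod (hI p v) = 1"
proof -
  have e: "1 - cnj p * v = v * cnj (v - p)"
    using cnj_mult_self_circ[OF assms(2)] by (simp add: algebra_simps)
  have "cmod (1 - cnj p * v) = cmod (p - v)"
    unfolding e using assms(2) by (simp add: norm_mult) (metis complex_cnj_diff complex_mod_cnj norm_minus_commute)
  moreover have "p \<noteq> v" using assms by auto
  ultimately show ?thesis using hI_den[OF assms] unfolding hI_def by (simp add: norm_divide)
qed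

lemma hI_invol: assumes "cmod p < 1" "1 - cnj p * v \<noteq> 0" shows "hI p (hI p v) = v"
proof -
  have pp: "1 - cnj p * p \<noteq> 0"
  proof
    assume "1 - cnj p * p = 0"
    hence "cmod (cnj p * p) = 1" by (metis eq_iff_diff_eq_0 norm_one)
    hence "cmod p * cmod p = 1" by (simp add: norm_mult)
    moreover have "cmod p * cmod p \<le> cmod p" using assms(1) by (simp add: mult_left_le_one_le)
    ultimately show False using assms(1) by simp
  qed
  define q where "q = 1 - cnj p * v"
  have q: "q \<noteq> 0" using assms(2) q_def by simp
  have h1: "p - hI p v = (p * q - (p - v)) / q" using q unfolding hI_def q_def[symmetric]
    by (simp add: field_simps)
  have h2: "1 - cnj p * hI p v = (q - cnj p * (p - v)) / q" using q unfolding hI_def q_def[symmetric]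
    by (simp add: field_simps)
  have "hI p (hI p v) = (p * q - (p - v)) / (q - cnj p * (p - v))"
    unfolding hI_def[of p "hI p v"] h1 h2 using q by simp
  also have "\<dots> = (p * (1 - cnj p * v) - (p - v)) / ((1 - cnj p * v) - cnj p * (p - v))"
    unfolding q_def ..
  also have "\<dots> = v * (1 - cnj p * p) / (1 - cnj p * p)"
    by (simp add: algebra_simps)
  also have "\<dots> = v" using pp by simp
  finally show ?thesis .
qed

lemma hI_nofix: assumes "cmod p < 1" "cmod v = 1" shows "hI p v \<noteq> v"
proof
  assume h: "hI p v = v"
  hence "p - v = v * (1 - cnj p * v)" using hI_den[OF assms] unfolding hI_def
    by (simp add: field_simps)
  hence "cnj v * (p - v) = cnj v * v * (1 - cnj p * v)" by simp
  moreover have "cnj v * v * (1 - cnj p * v) = 1 - cnj p * v" using cnj_mult_self_circ[OF assms(2)] by simp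
  moreover have "cnj v * (p - v) = cnj v * p - cnj v * v" by (simp add: right_diff_distrib)
  ultimately have "cnj v * p - cnj v * v = 1 - cnj p * v" by simp
  hence "cnj v * p - 1 = 1 - cnj p * v" using cnj_mult_self_circ[OF assms(2)] by simp
  hence "Re (cnj v * p - 1) = Re (1 - cnj p * v)" by simp
  hence "Re (cnj v * p) = 1" by (simp add: algebra_simps)
  moreover have "Re (cnj v * p) \<le> cmod (cnj v * p)" by (rule complex_Re_le_cmod)
  moreover have "cmod (cnj v * p) < 1" using assms by (simp add: norm_mult)
  ultimately show False by simp
qed


lemma cross_ident: "of_real (cross e d) * f + of_real (cross d f) * e + of_real (cross f e) * d = 0"
  by (simp add: cross_def complex_eq_iff algebra_simps)

lemma hI_num: assumes "cmod v = 1"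
  shows "of_real ((cmod (p - v))\<^sup>2) * (p - 2 * v + cnj p * v * v) = of_real (2 * (1 - Re (cnj v * p))) * (p - v) * (1 - cnj p * v)"
proof -
  have wv: "cnj v * v = 1" using cnj_mult_self_circ[OF assms] .
  have m: "of_real ((cmod (p - v))\<^sup>2) = (p - v) * (cnj p - cnj v)"
    by (subst complex_norm_square) simp
  have r: "of_real (2 * (1 - Re (cnj v * p))) = 2 - cnj v * p - v * cnj p"
    by (simp add: complex_eq_iff algebra_simps)
  define N where "N = p - 2 * v + cnj p * v * v"
  have wN: "cnj v * N = cnj v * p - 2 + cnj p * v"
  proof -
    have "cnj v * N = cnj v * p - 2 * (cnj v * v) + cnj p * v * (cnj v * v)"
      unfolding N_def by (simp add: algebra_simps)
    thus ?thesis using wv by simp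
  qed
  have "(cnj p - cnj v) * N - (2 - cnj v * p - v * cnj p) * (1 - cnj p * v)
      = (cnj p - cnj v) * N + (cnj v * N) * (1 - cnj p * v)"
    unfolding wN by (simp add: algebra_simps)
  also have "\<dots> = cnj p * N * (1 - cnj v * v)" by (simp add: algebra_simps)
  also have "\<dots> = 0" using wv by simp
  finally have "(cnj p - cnj v) * N = (2 - cnj v * p - v * cnj p) * (1 - cnj p * v)" by simp
  hence "(p - v) * ((cnj p - cnj v) * N) = (p - v) * ((2 - cnj v * p - v * cnj p) * (1 - cnj p * v))" by simp
  thus ?thesis unfolding m r N_def[symmetric] by (simp add: algebra_simps)
qed


lemma hI_dir: assumes "cmod p < 1" "cmod v = 1"
  shows "\<exists>t>0. hI p v - v = of_real t * (p - v)"
proof -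
  define q where "q = 1 - cnj p * v"
  have q: "q \<noteq> 0" using hI_den[OF assms] q_def by simp
  have pv: "p \<noteq> v" using assms by auto
  hence n0: "cmod (p - v) \<noteq> 0" by simp
  define t where "t = 2 * (1 - Re (cnj v * p)) / (cmod (p - v))\<^sup>2"
  have "Re (cnj v * p) \<le> cmod (cnj v * p)" by (rule complex_Re_le_cmod)
  moreover have "cmod (cnj v * p) < 1" using assms by (simp add: norm_mult)
  ultimately have "1 - Re (cnj v * p) > 0" by simp
  hence tpos: "t > 0" unfolding t_def using n0 by simp
  have "hI p v - v = (p - 2 * v + cnj p * v * v) / q"
    unfolding hI_def q_def[symmetric] using q by (simp add: field_simps q_def)
  also have "p - 2 * v + cnj p * v * v = of_real t * (p - v) * q"
  proof -
    have "of_real ((cmod (p - v))\<^sup>2) * (p - 2 * v + cnj p * v * v) = of_real ((cmod (p - v))\<^sup>2) * (of_real t * (p - v) * q)"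
      unfolding hI_num[OF assms(2)] t_def q_def using n0 by (simp add: field_simps)
    thus ?thesis using n0 by simp
  qed
  finally have "hI p v - v = of_real t * (p - v)" using q by simp
  thus ?thesis using tpos by blast
qed

lemma cmod_add_sq: "(cmod (v + e))\<^sup>2 = (cmod v)\<^sup>2 + 2 * Re (cnj v * e) + (cmod e)\<^sup>2"
  unfolding cmod_power2 by (simp add: power2_eq_square algebra_simps)

lemma h_neg_circ: assumes "cmod v = 1" "cmod w = 1" "w \<noteq> v" shows "Re (cnj v * (w - v)) < 0"
proof -
  have eq: "(cmod (v + (w - v)))\<^sup>2 = (cmod v)\<^sup>2 + 2 * Re (cnj v * (w - v)) + (cmod (w - v))\<^sup>2"
    by (rule cmod_add_sq)
  have c2: "(cmod (w - v))\<^sup>2 > 0" using assms(3) by simp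
  have h1: "cmod (v + (w - v)) = 1" using assms by simp
  have "(1::real) = 1 + 2 * Re (cnj v * (w - v)) + (cmod (w - v))\<^sup>2"
    using eq by (simp only: h1 assms(1) one_power2)
  thus ?thesis using c2 by linarith
qed

lemma h_neg_disk: assumes "cmod v = 1" "cmod p < 1" shows "Re (cnj v * (p - v)) < 0"
proof -
  have eq: "(cmod (v + (p - v)))\<^sup>2 = (cmod v)\<^sup>2 + 2 * Re (cnj v * (p - v)) + (cmod (p - v))\<^sup>2"
    by (rule cmod_add_sq)
  have p2: "(cmod p)\<^sup>2 < 1" using assms(2) by (simp add: abs_square_less_1)
  have h1: "v + (p - v) = p" by simp
  have "(cmod p)\<^sup>2 = 1 + 2 * Re (cnj v * (p - v)) + (cmod (p - v))\<^sup>2"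
    using eq by (simp only: h1 assms(1) one_power2)
  thus ?thesis using p2 zero_le_power2[of "cmod (p - v)"] by linarith
qed

lemma cross_ident_h: "cross x y * Re (cnj v * z) + cross y z * Re (cnj v * x) + cross z x * Re (cnj v * y) = 0"
  by (simp add: cross_def algebra_simps)

lemma cross_anti: "cross x y = - cross y x"
  by (simp add: cross_def algebra_simps)

lemma cross_trans:
  assumes "Re (cnj v * x) < 0" "Re (cnj v * y) < 0" "Re (cnj v * z) < 0"
    "cross x y \<ge> 0" "cross y z \<ge> 0"
  shows "cross x z \<ge> 0"
proof -
  have "cross z x * Re (cnj v * y) = - (cross x y * Re (cnj v * z) + cross y z * Re (cnj v * x))"
    using cross_ident_h[of x y v z] by linarith
  moreover have "cross x y * Re (cnj v * z) \<le> 0" using assms by (simp add: mult_nonneg_nonpos)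
  moreover have "cross y z * Re (cnj v * x) \<le> 0" using assms by (simp add: mult_nonneg_nonpos)
  ultimately have "cross z x * Re (cnj v * y) \<ge> 0" by linarith
  hence "cross z x \<le> 0" using assms(2) by (simp add: zero_le_mult_iff)
  thus ?thesis using cross_anti[of x z] by linarith
qed

lemma cross_zero:
  assumes "Re (cnj v * e) < 0" "Re (cnj v * f) < 0"
    "cross e f = 0" "cross e d \<ge> 0" "cross d f \<ge> 0"
  shows "cross e d = 0"
proof -
  have "cross e d * Re (cnj v * f) + cross d f * Re (cnj v * e) + cross f e * Re (cnj v * d) = 0"
    by (rule cross_ident_h)
  moreover have "cross f e * Re (cnj v * d) = 0" using assms(3) cross_anti[of f e] by simp
  moreover have "cross e d * Re (cnj v * f) \<le> 0" using assms by (simp add: mult_nonneg_nonpos)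
  moreover have "cross d f * Re (cnj v * e) \<le> 0" using assms by (simp add: mult_nonneg_nonpos)
  ultimately have "cross e d * Re (cnj v * f) = 0" by linarith
  thus ?thesis using assms(2) by simp
qed

lemma cross_parallel: assumes "cross e f = 0" "e \<noteq> 0"
  shows "f = of_real (Re (cnj e * f) / (cmod e)\<^sup>2) * e"
proof -
  have r: "complex_of_real (Re (cnj e * f)) = cnj e * f"
    using assms(1) by (simp add: complex_eq_iff cross_def)
  have ee: "cnj e * e = of_real ((cmod e)\<^sup>2)" by (subst mult.commute) (rule complex_norm_square[symmetric])
  have "of_real (Re (cnj e * f) / (cmod e)\<^sup>2) * e = cnj e * f * e / of_real ((cmod e)\<^sup>2)"
    unfolding of_real_divide r by simp
  also have "\<dots> = f * (cnj e * e) / of_real ((cmod e)\<^sup>2)" by (simp add: algebra_simps)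
  also have "\<dots> = f" unfolding ee using assms(2) by simp
  finally show ?thesis by simp
qed

lemma chord_hI: assumes "cmod v = 1" "cmod w = 1" "w \<noteq> v" "cross (w - v) (p - v) = 0"
    "1 - cnj p * v \<noteq> 0"
  shows "w = hI p v"
proof -
  obtain t :: real where t: "p - v = of_real t * (w - v)"
    using cross_parallel[OF assms(4)] assms(3) by (metis eq_iff_diff_eq_0)
  have p: "p = v + of_real t * (w - v)" using t by (simp add: algebra_simps)
  have vv: "v * cnj v = 1" and ww: "w * cnj w = 1"
    using cnj_mult_self_circ[OF assms(1)] cnj_mult_self_circ[OF assms(2)] by (simp_all add: mult.commute)
  have "v * w * cnj p = w * (v * cnj v) + of_real t * (v * (w * cnj w) - w * (v * cnj v))"
    unfolding p by (simp add: algebra_simps)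
  also have "\<dots> = w + of_real t * (v - w)" using vv ww by simp
  finally have "v * w * cnj p = w + of_real t * (v - w)" .
  hence "w * (1 - cnj p * v) = p - v" unfolding p by (simp add: algebra_simps)
  thus ?thesis unfolding hI_def using assms(5) by (simp add: field_simps)
qed


definition tang :: "complex \<Rightarrow> complex \<Rightarrow> complex \<Rightarrow> complex \<Rightarrow> complex \<Rightarrow> bool" where
  "tang P1 P2 P3 p v \<longleftrightarrow> 0 \<le> cross (p - v) (P1 - v) \<and> 0 \<le> cross (p - v) (P2 - v) \<and> 0 \<le> cross (p - v) (P3 - v)"

lemma cross_scale: "cross (of_real t * x) y = t * cross x y"
  by (simp add: cross_def algebra_simps)

lemma cross_self: "cross x x = 0"
  by (simp add: cross_def algebra_simps)

lemma hull_cross: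
  assumes "0 \<le> cross e (P1 - v)" "0 \<le> cross e (P2 - v)" "0 \<le> cross e (P3 - v)"
    "q \<in> convex hull {P1, P2, P3}"
  shows "0 \<le> cross e (q - v)"
proof -
  obtain a b c where abc: "0 \<le> a" "0 \<le> b" "0 \<le> c" "a + b + c = 1"
    and q: "q = a *\<^sub>R P1 + b *\<^sub>R P2 + c *\<^sub>R P3"
    using assms(4) unfolding convex_hull_3 by blast
  have vv: "v = a *\<^sub>R v + b *\<^sub>R v + c *\<^sub>R v"
    using abc(4) by (metis scaleR_add_left scaleR_one)
  have "q - v = (a *\<^sub>R P1 + b *\<^sub>R P2 + c *\<^sub>R P3) - (a *\<^sub>R v + b *\<^sub>R v + c *\<^sub>R v)"
    using q vv by simp
  also have "\<dots> = a *\<^sub>R (P1 - v) + b *\<^sub>R (P2 - v) + c *\<^sub>R (P3 - v)"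
    by (simp add: scaleR_diff_right)
  finally have "q - v = a *\<^sub>R (P1 - v) + b *\<^sub>R (P2 - v) + c *\<^sub>R (P3 - v)" .
  hence "cross e (q - v) = a * cross e (P1 - v) + b * cross e (P2 - v) + c * cross e (P3 - v)"
    unfolding cross_def by (simp only:) (simp add: scaleR_conv_of_real algebra_simps)
  thus ?thesis using abc assms(1-3) by simp
qed

lemma psi_eq:
  assumes hull: "convex hull {P1, P2, P3} \<subseteq> unit_disk"
    and v: "cmod v = 1" and p: "p \<in> {P1, P2, P3}" and tg: "tang P1 P2 P3 p v"
  shows "psi (convex hull {P1, P2, P3}) v = hI p v"
proof -
  let ?U = "convex hull {P1, P2, P3}"
  have inU: "\<And>x. x \<in> ?U \<Longrightarrow> cmod x < 1" using hull by (auto simp: disk_iff)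
  have pU: "p \<in> ?U" by (rule hull_inc[OF p])
  hence pd: "cmod p < 1" using inU by blast
  obtain t where t: "t > 0" "hI p v - v = of_real t * (p - v)" using hI_dir[OF pd v] by blast
  have tg': "0 \<le> cross (p - v) (q - v)" if "q \<in> ?U" for q
    using hull_cross[OF _ _ _ that] tg unfolding tang_def by blast
  show ?thesis unfolding psi_def
  proof (rule the_equality)
    show "hI p v \<in> unit_circle \<and> hI p v \<noteq> v \<and> (\<exists>pa\<in>?U. cross (hI p v - v) (pa - v) = 0) \<and>
      (\<forall>pa\<in>?U. 0 \<le> cross (hI p v - v) (pa - v))"
    proof (intro conjI)
      show "hI p v \<in> unit_circle" using hI_circ[OF pd v] by (simp add: circ_iff)
      show "hI p v \<noteq> v" using hI_nofix[OF pd v] .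
      show "\<exists>pa\<in>?U. cross (hI p v - v) (pa - v) = 0"
        using pU by (intro bexI[of _ p]) (simp_all add: t(2) cross_scale cross_self)
      show "\<forall>pa\<in>?U. 0 \<le> cross (hI p v - v) (pa - v)"
        using tg' t by (simp add: t(2) cross_scale)
    qed
  next
    fix w assume w: "w \<in> unit_circle \<and> w \<noteq> v \<and> (\<exists>pa\<in>?U. cross (w - v) (pa - v) = 0) \<and>
      (\<forall>pa\<in>?U. 0 \<le> cross (w - v) (pa - v))"
    have wU: "w \<in> unit_circle" using w by (rule conjunct1)
    have wv: "w \<noteq> v" using w by (elim conjE)
    have ex: "\<exists>pa\<in>?U. cross (w - v) (pa - v) = 0" using w by (elim conjE)
    have al: "\<forall>pa\<in>?U. 0 \<le> cross (w - v) (pa - v)" using w by (elim conjE)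
    from ex obtain p' where p'U: "p' \<in> ?U" and p'c: "cross (w - v) (p' - v) = 0" by (elim bexE)
    have wc: "cmod w = 1" using wU by (simp add: circ_iff)
    have e1: "Re (cnj v * (w - v)) < 0" by (rule h_neg_circ[OF v wc wv])
    have e2: "Re (cnj v * (p' - v)) < 0" by (rule h_neg_disk[OF v inU[OF p'U]])
    have e3: "0 \<le> cross (w - v) (p - v)" using al pU by (rule bspec)
    have e4: "0 \<le> cross (p - v) (p' - v)" by (rule tg'[OF p'U])
    have "cross (w - v) (p - v) = 0" by (rule cross_zero[OF e1 e2 p'c e3 e4])
    thus "w = hI p v" by (rule chord_hI[OF v wc wv _ hI_den[OF pd v]])
  qed
qed

lemma tang_exists:
  assumes v: "cmod v = 1" and d: "cmod P1 < 1" "cmod P2 < 1" "cmod P3 < 1"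
  shows "tang P1 P2 P3 P1 v \<or> tang P1 P2 P3 P2 v \<or> tang P1 P2 P3 P3 v"
proof -
  have h: "Re (cnj v * (P1 - v)) < 0" "Re (cnj v * (P2 - v)) < 0" "Re (cnj v * (P3 - v)) < 0"
    using h_neg_disk[OF v] d by auto
  define c12 where "c12 = cross (P1 - v) (P2 - v)"
  define c13 where "c13 = cross (P1 - v) (P3 - v)"
  define c23 where "c23 = cross (P2 - v) (P3 - v)"
  have a21: "cross (P2 - v) (P1 - v) = - c12" using cross_anti c12_def by metis
  have a31: "cross (P3 - v) (P1 - v) = - c13" using cross_anti c13_def by metis
  have a32: "cross (P3 - v) (P2 - v) = - c23" using cross_anti c23_def by metis
  show ?thesis
  proof (cases "0 \<le> c12 \<and> 0 \<le> c13")
    case True thus ?thesis unfolding tang_def cross_self c12_def c13_def by simp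
  next
    case F: False
    show ?thesis
    proof (cases "c12 < 0")
      case True
      show ?thesis
      proof (cases "0 \<le> c23")
        case True2: True
        thus ?thesis using True unfolding tang_def cross_self a21 c23_def by simp
      next
        case False
        have "0 \<le> cross (P3 - v) (P1 - v)"
          using cross_trans[OF h(3) h(2) h(1)] a32 a21 True False by linarith
        thus ?thesis using False unfolding tang_def cross_self a32 by simp
      qed
    next
      case False
      hence c13: "c13 < 0" using F by linarith
      have "0 \<le> cross (P3 - v) (P2 - v)"
        using cross_trans[OF h(3) h(1) h(2)] a31 c12_def c13 False by linarith
      thus ?thesis using c13 unfolding tang_def cross_self a31 by simp
    qed
  qed


qed


definition mob :: "complex \<Rightarrow> complex \<Rightarrow> complex \<Rightarrow> complex \<Rightarrow> complex \<Rightarrow> complex" where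
  "mob a b c d v = (a * v + b) / (c * v + d)"

definition mobrep :: "(complex \<Rightarrow> complex) \<Rightarrow> bool" where
  "mobrep F \<longleftrightarrow> (\<exists>a b c d. a * d - b * c \<noteq> 0 \<and> (\<forall>v. cmod v = 1 \<longrightarrow> F v = mob a b c d v))"

lemma mob_comp: assumes "c2 * v + d2 \<noteq> 0"
  shows "mob a1 b1 c1 d1 (mob a2 b2 c2 d2 v) =
    mob (a1 * a2 + b1 * c2) (a1 * b2 + b1 * d2) (c1 * a2 + d1 * c2) (c1 * b2 + d1 * d2) v"
proof -
  let ?q = "c2 * v + d2"
  have "mob a1 b1 c1 d1 (mob a2 b2 c2 d2 v) =
      ((a1 * (a2 * v + b2) + b1 * ?q) / ?q) / ((c1 * (a2 * v + b2) + d1 * ?q) / ?q)"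
    unfolding mob_def using assms by (simp add: field_simps)
  also have "\<dots> = (a1 * (a2 * v + b2) + b1 * ?q) / (c1 * (a2 * v + b2) + d1 * ?q)"
    using assms by simp
  also have "\<dots> = mob (a1 * a2 + b1 * c2) (a1 * b2 + b1 * d2) (c1 * a2 + d1 * c2) (c1 * b2 + d1 * d2) v"
    unfolding mob_def by (simp add: algebra_simps)
  finally show ?thesis .
qed

lemma hI_mob: "hI p v = mob (-1) p (- cnj p) 1 v"
  unfolding hI_def mob_def by (simp add: algebra_simps)

lemma det_hI: assumes "cmod p < 1" shows "(-1) * 1 - p * (- cnj p) \<noteq> (0::complex)"
proof
  assume "(-1) * 1 - p * (- cnj p) = (0::complex)"
  hence "p * cnj p = 1" by (simp add: algebra_simps)
  hence "cmod (p * cnj p) = 1" by simp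
  hence "cmod p * cmod p = 1" by (simp add: norm_mult)
  moreover have "cmod p * cmod p \<le> cmod p" using assms by (simp add: mult_left_le_one_le)
  ultimately show False using assms by simp
qed

lemma mobrep_hI: "cmod p < 1 \<Longrightarrow> mobrep (hI p)"
  unfolding mobrep_def using det_hI hI_mob by blast

lemma mobrep_comp: assumes "mobrep F" "cmod p < 1" shows "mobrep (\<lambda>v. F (hI p v))"
proof -
  obtain a b c d where det: "a * d - b * c \<noteq> 0" and F: "\<And>v. cmod v = 1 \<Longrightarrow> F v = mob a b c d v"
    using assms(1) unfolding mobrep_def by blast
  let ?a = "a * (-1) + b * (- cnj p)" and ?b = "a * p + b * 1"
  let ?c = "c * (-1) + d * (- cnj p)" and ?d = "c * p + d * 1"
  have "?a * ?d - ?b * ?c = (a * d - b * c) * ((-1) * 1 - p * (- cnj p))"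
    by (simp add: algebra_simps)
  hence det': "?a * ?d - ?b * ?c \<noteq> 0" using det det_hI[OF assms(2)] by simp
  have "F (hI p v) = mob ?a ?b ?c ?d v" if v: "cmod v = 1" for v
  proof -
    have "F (hI p v) = mob a b c d (mob (-1) p (- cnj p) 1 v)"
      using F[OF hI_circ[OF assms(2) v]] hI_mob by simp
    also have "\<dots> = mob ?a ?b ?c ?d v"
      by (rule mob_comp) (use hI_den[OF assms(2) v] in \<open>simp add: algebra_simps\<close>)
    finally show ?thesis .
  qed
  thus ?thesis unfolding mobrep_def using det' by blast
qed

lemma three_roots:
  fixes g k b x1 x2 x3 :: complex
  assumes "g * x1 * x1 + k * x1 - b = 0" "g * x2 * x2 + k * x2 - b = 0" "g * x3 * x3 + k * x3 - b = 0"
    "x1 \<noteq> x2" "x1 \<noteq> x3" "x2 \<noteq> x3"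
  shows "g = 0 \<and> k = 0 \<and> b = 0"
proof -
  have "(x1 - x2) * (g * (x1 + x2) + k) = 0" using assms(1,2) by (simp add: algebra_simps)
  hence e12: "g * (x1 + x2) + k = 0" using assms(4) by simp
  have "(x1 - x3) * (g * (x1 + x3) + k) = 0" using assms(1,3) by (simp add: algebra_simps)
  hence e13: "g * (x1 + x3) + k = 0" using assms(5) by simp
  have "g * (x2 - x3) = (g * (x1 + x2) + k) - (g * (x1 + x3) + k)" by (simp add: algebra_simps)
  hence "g * (x2 - x3) = 0" using e12 e13 by simp
  hence g: "g = 0" using assms(6) by simp
  hence k: "k = 0" using e12 by simp
  thus ?thesis using g assms(1) by simp
qed

lemma mob_fix3:
  assumes "mobrep F"
    "cmod x1 = 1" "cmod x2 = 1" "cmod x3 = 1" "x1 \<noteq> x2" "x1 \<noteq> x3" "x2 \<noteq> x3"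
    "F x1 = x1" "F x2 = x2" "F x3 = x3"
  shows "\<forall>v. cmod v = 1 \<longrightarrow> F v = v"
proof -
  obtain a b c d where det: "a * d - b * c \<noteq> 0" and F: "\<And>v. cmod v = 1 \<Longrightarrow> F v = mob a b c d v"
    using assms(1) unfolding mobrep_def by blast
  have root: "c * x * x + (d - a) * x - b = 0" if "cmod x = 1" "F x = x" for x
  proof -
    have m: "(a * x + b) / (c * x + d) = x" using F[OF that(1)] that(2) unfolding mob_def by simp
    have "c * x + d \<noteq> 0"
    proof
      assume "c * x + d = 0"
      hence "x = 0" using m by simp
      thus False using that(1) by simp
    qed
    hence "a * x + b = x * (c * x + d)" using m by (simp add: field_simps)
    thus ?thesis by (simp add: algebra_simps)
  qed
  have "c = 0 \<and> d - a = 0 \<and> b = 0"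
    by (rule three_roots[OF root[OF assms(2,8)] root[OF assms(3,9)] root[OF assms(4,10)] assms(5-7)])
  hence c: "c = 0" and da: "d = a" and b: "b = 0" by auto
  hence a: "a \<noteq> 0" using det by auto
  show ?thesis using F a unfolding mob_def c da b by simp
qed


lemma e1_exists:
  assumes a: "cmod a < 1" and b: "cmod b < 1" and ab: "a \<noteq> b"
  shows "\<exists>e1. cmod e1 = 1 \<and> b + e1 * hI a e1 * cnj b = e1 + hI a e1"
proof -
  define f where "f t = cmod (a + of_real t * (b - a))" for t
  define T where "T = 2 / cmod (b - a)"
  have nba: "cmod (b - a) > 0" using ab by simp
  have T0: "T \<ge> 0" unfolding T_def using nba by simp
  have f0: "f 0 < 1" unfolding f_def using a by simp
  have "f T \<ge> cmod (of_real T * (b - a)) - cmod a" unfolding f_def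
    by (metis add.commute norm_diff_ineq)
  moreover have "cmod (of_real T * (b - a)) = T * cmod (b - a)" using T0 by (simp add: norm_mult)
  moreover have "T * cmod (b - a) = 2" unfolding T_def using nba by simp
  ultimately have fT: "f T \<ge> 1" using a by simp
  have cont: "\<forall>x. 0 \<le> x \<and> x \<le> T \<longrightarrow> isCont f x" unfolding f_def by (intro allI impI) (intro continuous_intros)
  obtain t where t: "0 \<le> t" "t \<le> T" "f t = 1" using IVT[of f 0 1 T] f0 fT T0 cont by auto
  have tn: "t \<noteq> 0" using t(3) f0 by auto
  define e1 where "e1 = a + of_real t * (b - a)"
  have e1c: "cmod e1 = 1" using t(3) unfolding f_def e1_def by simp
  define e2 where "e2 = hI a e1"
  have den: "1 - cnj a * e1 \<noteq> 0" by (rule hI_den[OF a e1c])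
  have "e2 * (1 - cnj a * e1) = a - e1" unfolding e2_def hI_def using den by simp
  hence ga: "a + e1 * e2 * cnj a = e1 + e2" by (simp add: algebra_simps)
  define s where "s = 1 / t"
  have bs: "b = a + of_real s * (e1 - a)" unfolding s_def e1_def using tn by (simp add: field_simps)
  have ee: "e1 * cnj e1 = 1" using cnj_mult_self_circ[OF e1c] by (simp add: mult.commute)
  have "b + e1 * e2 * cnj b - (e1 + e2) =
      (a + e1 * e2 * cnj a - (e1 + e2)) + of_real s * (e1 - a + e2 * (e1 * cnj e1) - e1 * e2 * cnj a)"
    unfolding bs by (simp add: algebra_simps)
  also have "\<dots> = of_real s * ((e1 + e2) - (a + e1 * e2 * cnj a))" using ga ee by (simp add: algebra_simps)
  also have "\<dots> = 0" using ga by simp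
  finally show ?thesis using e1c unfolding e2_def by (intro exI[of _ e1]) simp
qed

definition Mw :: "complex \<Rightarrow> complex \<Rightarrow> complex \<Rightarrow> complex \<Rightarrow> complex" where
  "Mw c a b v = hI b (hI a (hI b (hI a (hI c v))))"

lemma Mw_not_id:
  assumes a: "cmod a < 1" and b: "cmod b < 1" and c: "cmod c < 1" and ab: "a \<noteq> b"
  shows "\<not> (\<forall>v. cmod v = 1 \<longrightarrow> Mw c a b v = v)"
proof
  assume allid: "\<forall>v. cmod v = 1 \<longrightarrow> Mw c a b v = v"
  obtain e1 where e1c: "cmod e1 = 1" and ch: "b + e1 * hI a e1 * cnj b = e1 + hI a e1"
    using e1_exists[OF a b ab] by blast
  define e2 where "e2 = hI a e1"
  have e2c: "cmod e2 = 1" unfolding e2_def by (rule hI_circ[OF a e1c])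
  have den: "1 - cnj b * e2 \<noteq> 0" by (rule hI_den[OF b e2c])
  have "e1 * (1 - cnj b * e2) = b - e2" using ch unfolding e2_def[symmetric] by (simp add: algebra_simps)
  hence be: "hI b e2 = e1" unfolding hI_def using den by (simp add: field_simps)
  have cc: "hI c (hI c e1) = e1" by (rule hI_invol[OF c hI_den[OF c e1c]])
  have "Mw c a b (hI c e1) = e1" unfolding Mw_def cc e2_def[symmetric] be by simp
  moreover have "Mw c a b (hI c e1) = hI c e1" using allid hI_circ[OF c e1c] by blast
  ultimately have "hI c e1 = e1" by simp
  thus False using hI_nofix[OF c e1c] by simp
qed

lemma card_le2:
  assumes "\<And>x y z. x \<in> S \<Longrightarrow> y \<in> S \<Longrightarrow> z \<in> S \<Longrightarrow> x = y \<or> x = z \<or> y = z"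
  shows "finite S \<and> card S \<le> 2"
proof (cases "S = {}")
  case True thus ?thesis by simp
next
  case False
  then obtain x where x: "x \<in> S" by blast
  show ?thesis
  proof (cases "S \<subseteq> {x}")
    case True thus ?thesis using finite_subset[OF True] card_mono[OF _ True] by fastforce
  next
    case False
    then obtain y where y: "y \<in> S" "y \<noteq> x" by blast
    have "S \<subseteq> {x, y}" using assms x y by blast
    moreover have "card {x, y} \<le> 2" by (simp add: card_insert_if)
    ultimately show ?thesis using finite_subset card_mono by (metis finite.emptyI finite.insertI order_trans)
  qed
qed

lemma Mw_fix_card:
  assumes a: "cmod a < 1" and b: "cmod b < 1" and c: "cmod c < 1" and ab: "a \<noteq> b"
  shows "finite {v. cmod v = 1 \<and> Mw c a b v = v} \<and> card {v. cmod v = 1 \<and> Mw c a b v = v} \<le> 2"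
proof (rule card_le2)
  have mr: "mobrep (Mw c a b)"
  proof -
    have "mobrep (\<lambda>v. hI b (hI a (hI b (hI a (hI c v)))))"
      by (intro mobrep_comp[where F = "\<lambda>v. hI b (hI a (hI b (hI a v)))"] 
          mobrep_comp[where F = "\<lambda>v. hI b (hI a (hI b v))"]
          mobrep_comp[where F = "\<lambda>v. hI b (hI a v)"]
          mobrep_comp[where F = "hI b"] mobrep_hI a b c)
    thus ?thesis unfolding Mw_def[abs_def] .
  qed
  fix x y z assume xyz: "x \<in> {v. cmod v = 1 \<and> Mw c a b v = v}" "y \<in> {v. cmod v = 1 \<and> Mw c a b v = v}"
    "z \<in> {v. cmod v = 1 \<and> Mw c a b v = v}"
  show "x = y \<or> x = z \<or> y = z"
  proof (rule ccontr)
    assume "\<not> (x = y \<or> x = z \<or> y = z)"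
    hence "\<forall>v. cmod v = 1 \<longrightarrow> Mw c a b v = v"
      using mob_fix3[OF mr, of x y z] xyz by auto
    thus False using Mw_not_id[OF a b c ab] by blast
  qed
qed


definition Pv :: "complex \<Rightarrow> complex \<Rightarrow> complex \<Rightarrow> nat \<Rightarrow> complex" where
  "Pv P1 P2 P3 i = (if i = 0 then P1 else if i = 1 then P2 else P3)"

lemma Pv_in: "Pv P1 P2 P3 i \<in> {P1, P2, P3}"
  unfolding Pv_def by auto

lemma Pv_disk: assumes "convex hull {P1, P2, P3} \<subseteq> unit_disk" shows "cmod (Pv P1 P2 P3 i) < 1"
proof -
  have "Pv P1 P2 P3 i \<in> convex hull {P1, P2, P3}" by (rule hull_inc[OF Pv_in])
  thus ?thesis using assms by (auto simp: disk_iff)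
qed

lemma Pv_dist: assumes "\<not> collinear {P1, P2, P3}" "i < 3" "j < 3" "i \<noteq> j"
  shows "Pv P1 P2 P3 i \<noteq> Pv P1 P2 P3 j"
proof -
  have "P1 \<noteq> P2" "P1 \<noteq> P3" "P2 \<noteq> P3" using assms(1) by (auto simp: collinear_2 insert_commute)
  moreover have "i = 0 \<or> i = 1 \<or> i = 2" "j = 0 \<or> j = 1 \<or> j = 2" using assms(2,3) by auto
  ultimately show ?thesis using assms(4) unfolding Pv_def by auto
qed

lemma f_step: assumes "convex hull {P1, P2, P3} \<subseteq> unit_disk" "cmod v = 1"
    "tang P1 P2 P3 (Pv P1 P2 P3 i) v"
  shows "psi (convex hull {P1, P2, P3}) v = hI (Pv P1 P2 P3 i) v"
  by (rule psi_eq[OF assms(1,2) Pv_in assms(3)])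

lemma lab_ex: assumes "convex hull {P1, P2, P3} \<subseteq> unit_disk" "cmod v = 1"
  shows "\<exists>i<3. tang P1 P2 P3 (Pv P1 P2 P3 i) v"
proof -
  have d: "cmod P1 < 1" "cmod P2 < 1" "cmod P3 < 1"
    using Pv_disk[OF assms(1), of 0] Pv_disk[OF assms(1), of 1] Pv_disk[OF assms(1), of 2]
    unfolding Pv_def by auto
  have "Pv P1 P2 P3 0 = P1" "Pv P1 P2 P3 1 = P2" "Pv P1 P2 P3 2 = P3" unfolding Pv_def by auto
  thus ?thesis using tang_exists[OF assms(2) d] by (metis zero_less_numeral one_less_numeral_iff semiring_norm(77) lessI numeral_2_eq_2 numeral_3_eq_3)
qed

lemma f_circ: assumes "convex hull {P1, P2, P3} \<subseteq> unit_disk" "cmod v = 1"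
  shows "cmod (psi (convex hull {P1, P2, P3}) v) = 1"
proof -
  obtain i where "i < 3" "tang P1 P2 P3 (Pv P1 P2 P3 i) v" using lab_ex[OF assms] by blast
  thus ?thesis using f_step[OF assms] hI_circ[OF Pv_disk[OF assms(1)] assms(2)] by simp
qed

lemma circ_invol: "cmod p < 1 \<Longrightarrow> cmod w = 1 \<Longrightarrow> hI p (hI p w) = w"
  by (rule hI_invol[OF _ hI_den])

lemma tang_both:
  assumes "cmod C < 1" "cmod v = 1" "tang P1 P2 P3 C v" "tang P1 P2 P3 C (hI C v)"
  shows "collinear {P1, P2, P3}"
proof -
  define u where "u = hI C v"
  have uc: "cmod u = 1" unfolding u_def by (rule hI_circ[OF assms(1,2)])
  have vu: "hI C u = v" unfolding u_def by (rule circ_invol[OF assms(1,2)])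
  have uv: "u \<noteq> v" unfolding u_def by (rule hI_nofix[OF assms(1,2)])
  obtain t where t: "t > 0" "u - v = of_real t * (C - v)" using hI_dir[OF assms(1,2)] u_def by blast
  obtain t' where t': "t' > 0" "v - u = of_real t' * (C - u)" using hI_dir[OF assms(1) uc] vu by blast
  have z: "cross (u - v) (q - v) = 0" if q: "q \<in> {P1, P2, P3}" for q
  proof -
    have "0 \<le> cross (C - v) (q - v)" using assms(3) q unfolding tang_def by auto
    hence g1: "0 \<le> cross (u - v) (q - v)" unfolding t(2) cross_scale using t(1) by simp
    have "0 \<le> cross (C - u) (q - u)" using assms(4) q unfolding tang_def u_def[symmetric] by auto
    hence "0 \<le> cross (v - u) (q - u)" unfolding t'(2) cross_scale using t'(1) by simp
    moreover have "cross (v - u) (q - u) = - cross (u - v) (q - v)"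
      by (simp add: cross_def algebra_simps)
    ultimately show ?thesis using g1 by linarith
  qed
  have uv0: "u - v \<noteq> 0" using uv by simp
  show ?thesis unfolding collinear_def
  proof (intro exI[of _ "u - v"] ballI)
    fix x y assume x: "x \<in> {P1, P2, P3}" and y: "y \<in> {P1, P2, P3}"
    have px: "x - v = of_real (Re (cnj (u - v) * (x - v)) / (cmod (u - v))\<^sup>2) * (u - v)"
      by (rule cross_parallel[OF z[OF x] uv0])
    have py: "y - v = of_real (Re (cnj (u - v) * (y - v)) / (cmod (u - v))\<^sup>2) * (u - v)"
      by (rule cross_parallel[OF z[OF y] uv0])
    have "x - y = (x - v) - (y - v)" by simp
    also have "\<dots> = (Re (cnj (u - v) * (x - v)) / (cmod (u - v))\<^sup>2 - Re (cnj (u - v) * (y - v)) / (cmod (u - v))\<^sup>2) *\<^sub>R (u - v)"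
      by (subst px, subst py) (simp add: scaleR_conv_of_real algebra_simps)
    finally show "\<exists>c. x - y = c *\<^sub>R (u - v)" by blast
  qed
qed


definition Wset :: "complex \<Rightarrow> complex \<Rightarrow> complex \<Rightarrow> nat \<Rightarrow> nat \<Rightarrow> nat \<Rightarrow> complex set" where
  "Wset P1 P2 P3 c a b = {v. cmod v = 1 \<and> tang P1 P2 P3 (Pv P1 P2 P3 c) v \<and>
      Mw (Pv P1 P2 P3 c) (Pv P1 P2 P3 a) (Pv P1 P2 P3 b) v = v}"

lemma Vc_card:
  assumes nc: "\<not> collinear {P1, P2, P3}" and hull: "convex hull {P1, P2, P3} \<subseteq> unit_disk"
    and abc: "a < 3" "b < 3" "a \<noteq> b"
  shows "finite (Wset P1 P2 P3 c a b \<union> Wset P1 P2 P3 c b a) \<and>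
    card (Wset P1 P2 P3 c a b \<union> Wset P1 P2 P3 c b a) \<le> 2"
proof -
  define A where "A = Pv P1 P2 P3 a"
  define B where "B = Pv P1 P2 P3 b"
  define C where "C = Pv P1 P2 P3 c"
  have dA: "cmod A < 1" and dB: "cmod B < 1" and dC: "cmod C < 1"
    unfolding A_def B_def C_def by (rule Pv_disk[OF hull])+
  have AB: "A \<noteq> B" unfolding A_def B_def by (rule Pv_dist[OF nc abc])
  define S where "S = {v. cmod v = 1 \<and> Mw C A B v = v}"
  have S: "finite S \<and> card S \<le> 2" unfolding S_def by (rule Mw_fix_card[OF dA dB dC AB])
  let ?W1 = "Wset P1 P2 P3 c a b" and ?W2 = "Wset P1 P2 P3 c b a"
  have W1: "?W1 = {v. cmod v = 1 \<and> tang P1 P2 P3 C v \<and> Mw C A B v = v}"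
    unfolding Wset_def A_def B_def C_def ..
  have W2: "?W2 = {v. cmod v = 1 \<and> tang P1 P2 P3 C v \<and> Mw C B A v = v}"
    unfolding Wset_def A_def B_def C_def ..
  define h where "h v = (if v \<in> ?W1 then v else hI C v)" for v
  have img: "h v \<in> S" if v: "v \<in> ?W1 \<union> ?W2" for v
  proof (cases "v \<in> ?W1")
    case True thus ?thesis unfolding h_def S_def W1 by simp
  next
    case False
    hence v2: "v \<in> ?W2" using v by blast
    hence vc: "cmod v = 1" and mv: "Mw C B A v = v" unfolding W2 by auto
    define y where "y = hI C v"
    have yc: "cmod y = 1" unfolding y_def by (rule hI_circ[OF dC vc])
    have cy: "hI C y = v" unfolding y_def by (rule circ_invol[OF dC vc])
    define y1 where "y1 = hI B y"
    define y2 where "y2 = hI A y1"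
    define y3 where "y3 = hI B y2"
    have y1c: "cmod y1 = 1" unfolding y1_def by (rule hI_circ[OF dB yc])
    have y2c: "cmod y2 = 1" unfolding y2_def by (rule hI_circ[OF dA y1c])
    have y3c: "cmod y3 = 1" unfolding y3_def by (rule hI_circ[OF dB y2c])
    have e: "hI A y3 = v" using mv unfolding Mw_def y_def[symmetric] y1_def[symmetric]
      y2_def[symmetric] y3_def[symmetric] .
    have "hI A v = y3" using circ_invol[OF dA y3c] e by simp
    hence "hI B (hI A v) = y2" using circ_invol[OF dB y2c] y3_def by simp
    hence "hI A (hI B (hI A v)) = y1" using circ_invol[OF dA y1c] y2_def by simp
    hence "hI B (hI A (hI B (hI A v))) = y" using circ_invol[OF dB yc] y1_def by simp
    hence "Mw C A B y = y" unfolding Mw_def cy .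
    thus ?thesis using False yc unfolding h_def S_def y_def by simp
  qed
  have inj: "inj_on h (?W1 \<union> ?W2)"
  proof (rule inj_onI)
    fix u v assume u: "u \<in> ?W1 \<union> ?W2" and v: "v \<in> ?W1 \<union> ?W2" and huv: "h u = h v"
    have uc: "cmod u = 1" and ut: "tang P1 P2 P3 C u" using u unfolding W1 W2 by auto
    have vc: "cmod v = 1" and vt: "tang P1 P2 P3 C v" using v unfolding W1 W2 by auto
    show "u = v"
    proof (cases "u \<in> ?W1")
      case uT: True
      show ?thesis
      proof (cases "v \<in> ?W1")
        case True thus ?thesis using uT huv unfolding h_def by simp
      next
        case False
        hence "u = hI C v" using uT huv unfolding h_def by simp
        hence "collinear {P1, P2, P3}" using tang_both[OF dC vc vt] ut by simp
        thus ?thesis using nc by simp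
      qed
    next
      case uF: False
      show ?thesis
      proof (cases "v \<in> ?W1")
        case True
        hence "v = hI C u" using uF huv unfolding h_def by simp
        hence "collinear {P1, P2, P3}" using tang_both[OF dC uc ut] vt by simp
        thus ?thesis using nc by simp
      next
        case False
        hence "hI C u = hI C v" using uF huv unfolding h_def by simp
        hence "hI C (hI C u) = hI C (hI C v)" by simp
        thus ?thesis using circ_invol[OF dC uc] circ_invol[OF dC vc] by simp
      qed
    qed
  qed
  have sub: "h ` (?W1 \<union> ?W2) \<subseteq> S" using img by blast
  have fin: "finite (?W1 \<union> ?W2)"
    using finite_imageD[OF finite_subset[OF sub] inj] S by blast
  have "card (?W1 \<union> ?W2) \<le> card S" by (rule card_inj_on_le[OF inj sub]) (use S in blast)
  thus ?thesis using fin S by simp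
qed


lemma comb_vals: "x0 \<noteq> x1 \<Longrightarrow> x1 \<noteq> x2 \<Longrightarrow> x2 \<noteq> x3 \<Longrightarrow> x3 \<noteq> x4 \<Longrightarrow> x4 \<noteq> x0 \<Longrightarrow> x0 = (0::nat) \<or> x0 = 1 \<or> x0 = 2 \<Longrightarrow>
  x1 = (0::nat) \<or> x1 = 1 \<or> x1 = 2 \<Longrightarrow> x2 = (0::nat) \<or> x2 = 1 \<or> x2 = 2 \<Longrightarrow>
  x3 = (0::nat) \<or> x3 = 1 \<or> x3 = 2 \<Longrightarrow> x4 = (0::nat) \<or> x4 = 1 \<or> x4 = 2 \<Longrightarrow>
 (x0 \<noteq> x2 \<and> x1 = x3 \<and> x2 = x4) \<or> (x1 \<noteq> x3 \<and> x2 = x4 \<and> x3 = x0) \<or>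
        (x2 \<noteq> x4 \<and> x3 = x0 \<and> x4 = x1) \<or> (x3 \<noteq> x0 \<and> x4 = x1 \<and> x0 = x2) \<or>
        (x4 \<noteq> x1 \<and> x0 = x2 \<and> x1 = x3)"
  by auto

lemma comb5:
  fixes l :: "nat \<Rightarrow> nat"
  assumes p: "\<And>k. l (k + 5) = l k" and b: "\<And>k. l k < 3" and adj: "\<And>k. l k \<noteq> l (Suc k)"
  shows "\<exists>r<5. l r \<noteq> l (r + 2) \<and> l (r + 1) = l (r + 3) \<and> l (r + 2) = l (r + 4)"
proof -
  have l5: "l 5 = l 0" "l 6 = l 1" "l 7 = l 2" "l 8 = l 3" using p[of 0] p[of 1] p[of 2] p[of 3] by simp_all
  have a: "l 0 \<noteq> l 1" "l 1 \<noteq> l 2" "l 2 \<noteq> l 3" "l 3 \<noteq> l 4" "l 4 \<noteq> l 5"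
    using adj[of 0] adj[of 1] adj[of 2] adj[of 3] adj[of 4] by (simp_all add: numeral_eq_Suc)
  have bb: "l 0 < 3" "l 1 < 3" "l 2 < 3" "l 3 < 3" "l 4 < 3" using b by auto
  have "(l 0 \<noteq> l 2 \<and> l 1 = l 3 \<and> l 2 = l 4) \<or> (l 1 \<noteq> l 3 \<and> l 2 = l 4 \<and> l 3 = l 5) \<or>
        (l 2 \<noteq> l 4 \<and> l 3 = l 5 \<and> l 4 = l 6) \<or> (l 3 \<noteq> l 5 \<and> l 4 = l 6 \<and> l 5 = l 7) \<or>
        (l 4 \<noteq> l 6 \<and> l 5 = l 7 \<and> l 6 = l 8)"
  proof -
    have c: "l 0 = 0 \<or> l 0 = 1 \<or> l 0 = 2" "l 1 = 0 \<or> l 1 = 1 \<or> l 1 = 2"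
      "l 2 = 0 \<or> l 2 = 1 \<or> l 2 = 2" "l 3 = 0 \<or> l 3 = 1 \<or> l 3 = 2" "l 4 = 0 \<or> l 4 = 1 \<or> l 4 = 2"
      using bb by auto
    show ?thesis unfolding l5 using comb_vals[OF a[unfolded l5] c] .
  qed
  thus ?thesis
  proof (elim disjE)
    assume "l 0 \<noteq> l 2 \<and> l 1 = l 3 \<and> l 2 = l 4" thus ?thesis by (auto simp: numeral_eq_Suc intro!: exI[of _ 0])
  next
    assume "l 1 \<noteq> l 3 \<and> l 2 = l 4 \<and> l 3 = l 5" thus ?thesis by (auto simp: numeral_eq_Suc intro!: exI[of _ 1])
  next
    assume "l 2 \<noteq> l 4 \<and> l 3 = l 5 \<and> l 4 = l 6" thus ?thesis by (auto simp: numeral_eq_Suc intro!: exI[of _ 2])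
  next
    assume "l 3 \<noteq> l 5 \<and> l 4 = l 6 \<and> l 5 = l 7" thus ?thesis by (auto simp: numeral_eq_Suc intro!: exI[of _ 3])
  next
    assume "l 4 \<noteq> l 6 \<and> l 5 = l 7 \<and> l 6 = l 8" thus ?thesis by (auto simp: numeral_eq_Suc intro!: exI[of _ 4])
  qed
qed


lemma funpow_shift: "(f ^^ (j + m)) x = (f ^^ m) ((f ^^ j) x)"
  by (subst add.commute) (simp add: funpow_add)

lemma rep_exists:
  assumes nc: "\<not> collinear {P1, P2, P3}" and hull: "convex hull {P1, P2, P3} \<subseteq> unit_disk"
    and per: "periodic_pt (psi (convex hull {P1, P2, P3})) 5 x"
  shows "\<exists>v. (\<exists>c a b. c < 3 \<and> a < 3 \<and> b < 3 \<and> c \<noteq> a \<and> c \<noteq> b \<and> a \<noteq> b \<and> v \<in> Wset P1 P2 P3 c a b) \<and>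
     orbit (psi (convex hull {P1, P2, P3})) v = orbit (psi (convex hull {P1, P2, P3})) x"
proof -
  define f where "f = psi (convex hull {P1, P2, P3})"
  define z where "z k = (f ^^ k) x" for k
  have xc: "cmod x = 1" and x5: "(f ^^ 5) x = x" and minp: "\<And>k. 0 < k \<Longrightarrow> k < 5 \<Longrightarrow> (f ^^ k) x \<noteq> x"
    using per unfolding periodic_pt_def f_def circ_iff by auto
  have zS: "z (Suc k) = f (z k)" for k unfolding z_def by simp
  have zc: "cmod (z k) = 1" for k
  proof (induction k)
    case 0 thus ?case using xc unfolding z_def by simp
  next
    case (Suc k) thus ?case unfolding zS f_def by (rule f_circ[OF hull])
  qed
  have zsh: "z (j + m) = (f ^^ m) (z j)" for j m unfolding z_def by (rule funpow_shift)
  have z5: "z (k + 5) = z k" for k unfolding zsh unfolding z_def using x5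
    by (metis funpow_shift add.commute)
  have z5m: "z (j + 5 * m) = z j" for j m
  proof (induction m)
    case 0 thus ?case by simp
  next
    case (Suc m)
    have "z (j + 5 * Suc m) = z ((j + 5 * m) + 5)" by (simp add: algebra_simps)
    thus ?case using z5 Suc by simp
  qed
  have zmod: "z k = z (k mod 5)" for k using z5m[of "k mod 5" "k div 5"] by simp
  define lab where "lab k = (SOME i. i < 3 \<and> tang P1 P2 P3 (Pv P1 P2 P3 i) (z (k mod 5)))" for k
  have labp: "lab k < 3 \<and> tang P1 P2 P3 (Pv P1 P2 P3 (lab k)) (z k)" for k
  proof -
    have "\<exists>i<3. tang P1 P2 P3 (Pv P1 P2 P3 i) (z (k mod 5))" by (rule lab_ex[OF hull zc])
    hence "lab k < 3 \<and> tang P1 P2 P3 (Pv P1 P2 P3 (lab k)) (z (k mod 5))"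
      unfolding lab_def by (rule someI_ex)
    thus ?thesis using zmod[of k] by simp
  qed
  have step: "z (Suc k) = hI (Pv P1 P2 P3 (lab k)) (z k)" for k
    unfolding zS f_def by (rule f_step[OF hull zc]) (use labp in blast)
  have lab5: "lab (k + 5) = lab k" for k unfolding lab_def by simp
  have adj: "lab k \<noteq> lab (Suc k)" for k
  proof
    assume eq: "lab k = lab (Suc k)"
    define p where "p = Pv P1 P2 P3 (lab k)"
    have dp: "cmod p < 1" unfolding p_def by (rule Pv_disk[OF hull])
    have "z (Suc (Suc k)) = hI p (hI p (z k))" using step[of "Suc k"] step[of k] eq unfolding p_def by simp
    hence zz: "z (k + 2) = z k" using circ_invol[OF dp zc] by simp
    have "z 2 = z (2 + 5 * k)" by (rule z5m[symmetric])
    also have "\<dots> = z ((k + 2) + 4 * k)" by (simp add: algebra_simps)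
    also have "\<dots> = (f ^^ (4 * k)) (z k)" using zsh[of "k + 2" "4 * k"] zz by simp
    also have "\<dots> = z (k + 4 * k)" unfolding zsh ..
    also have "\<dots> = z (0 + 5 * k)" by (simp add: algebra_simps)
    also have "\<dots> = z 0" by (rule z5m)
    finally have "(f ^^ 2) x = x" unfolding z_def by simp
    thus False using minp[of 2] by simp
  qed
  obtain r where r: "r < 5" "lab r \<noteq> lab (r + 2)" "lab (r + 1) = lab (r + 3)" "lab (r + 2) = lab (r + 4)"
    using comb5[of lab] lab5 labp adj by blast
  define c where "c = lab r"
  define a where "a = lab (r + 1)"
  define b where "b = lab (r + 2)"
  have abc: "c < 3" "a < 3" "b < 3" using labp unfolding a_def b_def c_def by blast+
  have ca: "c \<noteq> a" unfolding c_def a_def using adj[of r] by simp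
  have ab: "a \<noteq> b" unfolding b_def a_def using adj[of "r + 1"] by simp
  have cb: "c \<noteq> b" unfolding c_def b_def using r(2) .
  have "Mw (Pv P1 P2 P3 c) (Pv P1 P2 P3 a) (Pv P1 P2 P3 b) (z r) = z (r + 5)"
  proof -
    have s0: "z (r + 1) = hI (Pv P1 P2 P3 c) (z r)" using step[of r] unfolding c_def by (simp add: numeral_eq_Suc)
    have s1: "z (r + 2) = hI (Pv P1 P2 P3 a) (z (r + 1))" using step[of "r + 1"] unfolding a_def by (simp add: numeral_eq_Suc)
    have s2: "z (r + 3) = hI (Pv P1 P2 P3 b) (z (r + 2))" using step[of "r + 2"] unfolding b_def by (simp add: numeral_eq_Suc)
    have s3: "z (r + 4) = hI (Pv P1 P2 P3 a) (z (r + 3))" using step[of "r + 3"] r(3) unfolding a_def by (simp add: numeral_eq_Suc)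
    have s4: "z (r + 5) = hI (Pv P1 P2 P3 b) (z (r + 4))" using step[of "r + 4"] r(4) unfolding b_def
      by (simp add: numeral_eq_Suc)
    show ?thesis unfolding Mw_def s4 s3 s2 s1 s0 ..
  qed
  hence mw: "Mw (Pv P1 P2 P3 c) (Pv P1 P2 P3 a) (Pv P1 P2 P3 b) (z r) = z r" using z5 by simp
  have inW: "z r \<in> Wset P1 P2 P3 c a b" unfolding Wset_def using zc mw labp unfolding c_def by blast
  have orb: "orbit f (z r) = orbit f x"
  proof -
    have "orbit f (z r) = {z (r + k) | k. True}" unfolding orbit_def zsh ..
    also have "\<dots> = {z k | k. True}"
    proof (intro set_eqI iffI)
      fix y assume "y \<in> {z (r + k) | k. True}" thus "y \<in> {z k | k. True}" by blast
    next
      fix y assume "y \<in> {z k | k. True}"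
      then obtain k where y: "y = z k" by blast
      have "z k = z (r + (k + 4 * r))" using z5m[of k r] by (simp add: algebra_simps)
      thus "y \<in> {z (r + k) | k. True}" using y by blast
    qed
    also have "\<dots> = orbit f x" unfolding orbit_def z_def ..
    finally show ?thesis .
  qed
  show ?thesis using inW orb abc ca cb ab unfolding f_def by blast
qed


theorem theorem5p2:
  fixes P1 P2 P3 :: complex
  assumes "\<not> collinear {P1, P2, P3}"
    and "convex hull {P1, P2, P3} \<subseteq> unit_disk"
    and "rot_num (psi (convex hull {P1, P2, P3})) = 2 / 5"
  shows "finite (periodic_orbits (psi (convex hull {P1, P2, P3})) 5) \<and>
         card (periodic_orbits (psi (convex hull {P1, P2, P3})) 5) \<le> 6"
proof -
  let ?f = "psi (convex hull {P1, P2, P3})"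
  let ?W = "Wset P1 P2 P3"
  define V where "V = (?W 0 1 2 \<union> ?W 0 2 1) \<union> (?W 1 0 2 \<union> ?W 1 2 0) \<union> (?W 2 0 1 \<union> ?W 2 1 0)"
  have c1: "finite (?W 0 1 2 \<union> ?W 0 2 1) \<and> card (?W 0 1 2 \<union> ?W 0 2 1) \<le> 2"
    by (rule Vc_card[OF assms(1,2)]) simp_all
  have c2: "finite (?W 1 0 2 \<union> ?W 1 2 0) \<and> card (?W 1 0 2 \<union> ?W 1 2 0) \<le> 2"
    by (rule Vc_card[OF assms(1,2)]) simp_all
  have c3: "finite (?W 2 0 1 \<union> ?W 2 1 0) \<and> card (?W 2 0 1 \<union> ?W 2 1 0) \<le> 2"
    by (rule Vc_card[OF assms(1,2)]) simp_all
  have finV: "finite V" unfolding V_def using c1 c2 c3 by blast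
  have "card V \<le> card (?W 0 1 2 \<union> ?W 0 2 1) + card (?W 1 0 2 \<union> ?W 1 2 0) + card (?W 2 0 1 \<union> ?W 2 1 0)"
    unfolding V_def by (meson card_Un_le add_right_mono order_trans)
  hence cardV: "card V \<le> 6" using c1 c2 c3 by linarith
  have sub: "periodic_orbits ?f 5 \<subseteq> orbit ?f ` V"
  proof
    fix Orb assume "Orb \<in> periodic_orbits ?f 5"
    then obtain x where O: "Orb = orbit ?f x" and per: "periodic_pt ?f 5 x"
      unfolding periodic_orbits_def by blast
    obtain v c a b where cab: "c < 3" "a < 3" "b < 3" "c \<noteq> a" "c \<noteq> b" "a \<noteq> b"
      and vW: "v \<in> ?W c a b" and orb: "orbit ?f v = orbit ?f x"
      using rep_exists[OF assms(1,2) per] by blast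
    have "c = 0 \<or> c = 1 \<or> c = 2" "a = 0 \<or> a = 1 \<or> a = 2" "b = 0 \<or> b = 1 \<or> b = 2" using cab by auto
    hence "v \<in> V" using vW cab(4-6) unfolding V_def by auto
    thus "Orb \<in> orbit ?f ` V" using O orb by blast
  qed
  have finI: "finite (orbit ?f ` V)" using finV by simp
  have "card (periodic_orbits ?f 5) \<le> card (orbit ?f ` V)" by (rule card_mono[OF finI sub])
  also have "\<dots> \<le> card V" by (rule card_image_le[OF finV])
  finally show ?thesis using finite_subset[OF sub finI] cardV by simp
qed


end
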